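(* Fix $x\in\mathbb{R}^n$ and suppose (A1) holds. Then for each $k\in[K]$, with probability at least $1-2K/n^2$, $$\|\tilde S_2\|\le\frac{4\sqrt6}{3}\max_{k'\in[K]}\|x^{(k')}\|_4^2\,(n_k\log n)^{1/2}s_n+4\|x\|_\infty^2\log n.$$
   Context: Let $n\ge2$, $K\ge1$, $Z\in\{0,1\}^{n\times K}$ a community membership matrix (each row exactly one $1$), $\psi_i$ the community of node $i$, $n_k=\sum_iZ_{i,k}\ge1$. $*$ is the Hadamard product, $x^{(k')}=Z_{\cdot,k'}*x$, $e_{k_1}\in\mathbb{R}^K$ the standard basis vector, $\|\cdot\|$ spectral norm. (A1) Stochastic block model: $B\in[0,1]^{K\times K}$ symmetric, $P=ZBZ^\top$; $\{A_{i,j}\}_{i<j}$ independent Bernoulli$(P_{i,j})$, $A_{j,i}=A_{i,j}$, $A_{i,i}=1$; $s_n=\max_{k_1,k_2}B_{k_1,k_2}$. Let $\tilde A$ be an independent copy of $A$ and define the diagonal matrix $\tilde S_2=\sum_{k_1=1}^K\sum_{i:\psi_i=k_1}\sum_{j:\psi_j=k}x_i^2(A-\mathbb{E}A)_{i,j}(\tilde A-\mathbb{E}A)_{i,j}\,e_{k_1}e_{k_1}^\top$. *)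

theory Defs
  imports "HOL-Analysis.Analysis" "HOL-Probability.Probability"
begin

text \<open>Nodes are 0..n-1 (type nat), communities are the elements of a finite type 'k
  (so K = CARD('k)); \<psi> i is the community of node i.  The pair (A, A~) of independent
  SBM adjacency matrices is generated from independent pairs of Bernoulli variables
  on the index set {(i,j). i < j < n}.\<close>

definition sbm_P :: "('k \<Rightarrow> 'k \<Rightarrow> real) \<Rightarrow> (nat \<Rightarrow> 'k) \<Rightarrow> nat \<Rightarrow> nat \<Rightarrow> real" where
  "sbm_P B \<psi> i j = B (\<psi> i) (\<psi> j)"

definition sbm_pairs :: "nat \<Rightarrow> (nat \<times> nat) set" where
  "sbm_pairs n = {(i, j). i < j \<and> j < n}"

definition sbm_pair_pmf :: "nat \<Rightarrow> ('k \<Rightarrow> 'k \<Rightarrow> real) \<Rightarrow> (nat \<Rightarrow> 'k)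
    \<Rightarrow> ((nat \<times> nat) \<Rightarrow> bool \<times> bool) pmf" where
  "sbm_pair_pmf n B \<psi> = Pi_pmf (sbm_pairs n) (False, False)
     (\<lambda>(i, j). pair_pmf (bernoulli_pmf (sbm_P B \<psi> i j)) (bernoulli_pmf (sbm_P B \<psi> i j)))"

definition adjA :: "((nat \<times> nat) \<Rightarrow> bool \<times> bool) \<Rightarrow> nat \<Rightarrow> nat \<Rightarrow> real" where
  "adjA \<omega> i j = (if i = j then 1 else of_bool (fst (\<omega> (min i j, max i j))))"

definition adjA' :: "((nat \<times> nat) \<Rightarrow> bool \<times> bool) \<Rightarrow> nat \<Rightarrow> nat \<Rightarrow> real" where
  "adjA' \<omega> i j = (if i = j then 1 else of_bool (snd (\<omega> (min i j, max i j))))"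

definition EA :: "nat \<Rightarrow> ('k \<Rightarrow> 'k \<Rightarrow> real) \<Rightarrow> (nat \<Rightarrow> 'k) \<Rightarrow> nat \<Rightarrow> nat \<Rightarrow> real" where
  "EA n B \<psi> i j = measure_pmf.expectation (sbm_pair_pmf n B \<psi>) (\<lambda>\<omega>. adjA \<omega> i j)"

definition S2tilde :: "nat \<Rightarrow> ('k::finite \<Rightarrow> 'k \<Rightarrow> real) \<Rightarrow> (nat \<Rightarrow> 'k) \<Rightarrow> (nat \<Rightarrow> real)
    \<Rightarrow> 'k \<Rightarrow> ((nat \<times> nat) \<Rightarrow> bool \<times> bool) \<Rightarrow> real^'k^'k" where
  "S2tilde n B \<psi> x k \<omega> = (\<chi> k1 k2. if k1 = k2 then
      (\<Sum>i\<in>{i. i < n \<and> \<psi> i = k1}. \<Sum>j\<in>{j. j < n \<and> \<psi> j = k}.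
         (x i)^2 * (adjA \<omega> i j - EA n B \<psi> i j) * (adjA' \<omega> i j - EA n B \<psi> i j))
      else 0)"

definition spec_norm :: "real^'k^'k \<Rightarrow> real" where
  "spec_norm M = onorm (\<lambda>v. M *v v)"

definition comm_size :: "nat \<Rightarrow> (nat \<Rightarrow> 'k) \<Rightarrow> 'k \<Rightarrow> nat" where
  "comm_size n \<psi> k = card {i. i < n \<and> \<psi> i = k}"

definition norm4_sq_comm :: "nat \<Rightarrow> (nat \<Rightarrow> 'k) \<Rightarrow> (nat \<Rightarrow> real) \<Rightarrow> 'k \<Rightarrow> real" where
  "norm4_sq_comm n \<psi> x k' = sqrt (\<Sum>i\<in>{i. i < n \<and> \<psi> i = k'}. (x i)^4)"

definition sup_norm :: "nat \<Rightarrow> (nat \<Rightarrow> real) \<Rightarrow> real" where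
  "sup_norm n x = Max ((\<lambda>i. \<bar>x i\<bar>) ` {..<n})"

definition s_n :: "('k::finite \<Rightarrow> 'k \<Rightarrow> real) \<Rightarrow> real" where
  "s_n B = Max (range (\<lambda>(a, b). B a b))"

end

theory Submission imports Defs
begin

lemma fact_ge_2_3pow: "(2::real) * 3 ^ n \<le> fact (n + 2)"
proof (induction n)
  case 0 then show ?case by simp
next
  case (Suc n)
  have "(2::real)*3^Suc n = 3*(2*3^n)" by simp
  also have "\<dots> \<le> 3 * fact (n+2)" using Suc.IH by linarith
  also have "\<dots> \<le> (real n + 3) * fact (n+2)" by (intro mult_right_mono) auto
  also have "\<dots> = fact (Suc n + 2)" by (simp add: algebra_simps)
  finally show ?case .
qed

lemma exp_bern:
  fixes u r :: real
  assumes u: "\<bar>u\<bar> \<le> r" and r: "r < 3"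
  shows "exp u \<le> 1 + u + u\<^sup>2 / (2 * (1 - r / 3))"
proof -
  have r0: "0 \<le> r" using u by linarith
  have sumsx: "(\<lambda>n. u\<^sup>2 / 2 * (r/3) ^ n) sums (u\<^sup>2 / 2 * (1 / (1 - r/3)))"
    by (intro sums_mult geometric_sums) (use r0 r in auto)
  have "suminf (\<lambda>n. inverse(fact (n+2)) * (u ^ (n + 2))) \<le> suminf (\<lambda>n. u\<^sup>2 / 2 * (r/3) ^ n)"
  proof (intro suminf_le allI)
    show "inverse (fact (n + 2)) * u ^ (n + 2) \<le> u\<^sup>2 / 2 * (r/3) ^ n" for n :: nat
    proof -
      have f: "inverse (fact (n + 2)) \<le> inverse ((2::real) * 3 ^ n)"
        by (rule le_imp_inverse_le) (use fact_ge_2_3pow[of n] in auto)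
      have "inverse (fact (n + 2)) * u ^ (n + 2) \<le> inverse (fact (n + 2)) * (\<bar>u\<bar> ^ n * u\<^sup>2)"
      proof (intro mult_left_mono)
        have "u ^ n \<le> \<bar>u\<bar> ^ n" by (metis abs_ge_self power_abs)
        then show "u ^ (n + 2) \<le> \<bar>u\<bar> ^ n * u\<^sup>2"
          unfolding power_add by (intro mult_right_mono) auto
      qed auto
      also have "\<dots> \<le> inverse ((2::real) * 3 ^ n) * (r ^ n * u\<^sup>2)"
        by (intro mult_mono f mult_right_mono power_mono u) auto
      also have "\<dots> = u\<^sup>2 / 2 * (r/3) ^ n"
        by (simp add: power_divide field_simps)
      finally show ?thesis .
    qed
    show "summable (\<lambda>n. inverse (fact (n + 2)) * u ^ (n + 2))"
      by (rule summable_exp [THEN summable_ignore_initial_segment])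
    show "summable (\<lambda>n. u\<^sup>2 / 2 * (r/3) ^ n)"
      by (rule sums_summable [OF sumsx])
  qed
  also have "\<dots> = u\<^sup>2 / 2 * (1 / (1 - r/3))"
    by (rule sums_unique [THEN sym]) (rule sumsx)
  also have "\<dots> = u\<^sup>2 / (2 * (1 - r / 3))" using r by (simp add: field_simps)
  finally show ?thesis
    unfolding exp_first_two_terms by auto
qed

lemma mgf_bound:
  fixes q :: "'b::finite pmf" and g :: "'b \<Rightarrow> real" and l M :: real
  assumes E0: "measure_pmf.expectation q g = 0"
    and bnd: "\<And>y. \<bar>g y\<bar> \<le> M" and l: "0 \<le> l" "l * M < 3"
  shows "measure_pmf.expectation q (\<lambda>y. exp (l * g y))
       \<le> exp (l\<^sup>2 * measure_pmf.expectation q (\<lambda>y. (g y)\<^sup>2) / (2 * (1 - l * M / 3)))"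
proof -
  have int: "integrable (measure_pmf q) h" for h :: "'b \<Rightarrow> real"
    by (rule integrable_measure_pmf_finite) simp
  define c where "c = l\<^sup>2 / (2 * (1 - l * M / 3))"
  have pt: "exp (l * g y) \<le> 1 + l * g y + c * (g y)\<^sup>2" for y
  proof -
    have "\<bar>l * g y\<bar> \<le> l * M" using bnd[of y] l by (simp add: abs_mult mult_left_mono)
    from exp_bern[OF this l(2)] show ?thesis
      by (simp add: c_def power_mult_distrib)
  qed
  have "measure_pmf.expectation q (\<lambda>y. exp (l * g y))
      \<le> measure_pmf.expectation q (\<lambda>y. 1 + l * g y + c * (g y)\<^sup>2)"
    by (intro integral_mono int pt)
  also have "\<dots> = 1 + l * measure_pmf.expectation q g + c * measure_pmf.expectation q (\<lambda>y. (g y)\<^sup>2)"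
    using int by (simp add: Bochner_Integration.integral_add)
  also have "\<dots> = 1 + c * measure_pmf.expectation q (\<lambda>y. (g y)\<^sup>2)" using E0 by simp
  also have "\<dots> \<le> exp (c * measure_pmf.expectation q (\<lambda>y. (g y)\<^sup>2))"
    by (rule exp_ge_add_one_self)
  finally show ?thesis by (simp add: c_def)
qed

lemma bernstein_tail:
  fixes A :: "'a set" and p :: "'a \<Rightarrow> 'b::finite pmf" and f :: "'a \<Rightarrow> 'b \<Rightarrow> real"
    and l M V t :: real
  assumes fin: "finite A"
    and E0: "\<And>a. a \<in> A \<Longrightarrow> measure_pmf.expectation (p a) (f a) = 0"
    and bnd: "\<And>a y. a \<in> A \<Longrightarrow> \<bar>f a y\<bar> \<le> M"
    and V: "(\<Sum>a\<in>A. measure_pmf.expectation (p a) (\<lambda>y. (f a y)\<^sup>2)) \<le> V"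
    and l: "0 < l" "l * M < 3"
  shows "measure_pmf.prob (Pi_pmf A d p) {\<omega>. (\<Sum>a\<in>A. f a (\<omega> a)) \<ge> t}
      \<le> exp (- l * t + l\<^sup>2 * V / (2 * (1 - l * M / 3)))"
proof -
  let ?P = "Pi_pmf A d p"
  define c where "c = l\<^sup>2 / (2 * (1 - l * M / 3))"
  have c0: "0 \<le> c" unfolding c_def using l by (intro divide_nonneg_pos) (auto simp: mult.commute[of M l])
  have finP: "finite (set_pmf ?P)"
    using fin by (subst set_Pi_pmf) (auto intro!: finite_PiE_dflt)
  have intP: "integrable (measure_pmf ?P) h" for h :: "('a \<Rightarrow> 'b) \<Rightarrow> real"
    by (rule integrable_measure_pmf_finite[OF finP])
  have "measure_pmf.expectation ?P (\<lambda>\<omega>. exp (l * (\<Sum>a\<in>A. f a (\<omega> a))))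
      = measure_pmf.expectation ?P (\<lambda>\<omega>. \<Prod>a\<in>A. exp (l * f a (\<omega> a)))"
    by (simp add: sum_distrib_left exp_sum fin)
  also have "\<dots> = (\<Prod>a\<in>A. measure_pmf.expectation (p a) (\<lambda>y. exp (l * f a y)))"
    by (rule expectation_prod_Pi_pmf[OF fin]) (auto intro: integrable_measure_pmf_finite)
  also have "\<dots> \<le> (\<Prod>a\<in>A. exp (c * measure_pmf.expectation (p a) (\<lambda>y. (f a y)\<^sup>2)))"
  proof (intro prod_mono conjI)
    fix a assume a: "a \<in> A"
    show "0 \<le> measure_pmf.expectation (p a) (\<lambda>y. exp (l * f a y))"
      by (intro Bochner_Integration.integral_nonneg) auto
    show "measure_pmf.expectation (p a) (\<lambda>y. exp (l * f a y))
        \<le> exp (c * measure_pmf.expectation (p a) (\<lambda>y. (f a y)\<^sup>2))"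
      using mgf_bound[of "p a" "f a" M l, OF E0[OF a] bnd[OF a]] l
      by (simp add: c_def mult.commute)
  qed
  also have "\<dots> = exp (c * (\<Sum>a\<in>A. measure_pmf.expectation (p a) (\<lambda>y. (f a y)\<^sup>2)))"
    by (simp add: exp_sum fin sum_distrib_left)
  also have "\<dots> \<le> exp (c * V)"
    using V c0 by (simp add: mult_left_mono)
  finally have mgf: "measure_pmf.expectation ?P (\<lambda>\<omega>. exp (l * (\<Sum>a\<in>A. f a (\<omega> a)))) \<le> exp (c * V)" .
  have "measure_pmf.prob ?P {\<omega>. (\<Sum>a\<in>A. f a (\<omega> a)) \<ge> t}
      = measure_pmf.prob ?P {\<omega>\<in>space (measure_pmf ?P). exp (l * (\<Sum>a\<in>A. f a (\<omega> a))) \<ge> exp (l * t)}"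
    using l by simp
  also have "\<dots> \<le> measure_pmf.expectation ?P (\<lambda>\<omega>. exp (l * (\<Sum>a\<in>A. f a (\<omega> a)))) / exp (l * t)"
    by (rule integral_Markov_inequality_measure[where A = UNIV]) (auto intro: intP)
  also have "\<dots> \<le> exp (c * V) / exp (l * t)"
    by (intro divide_right_mono mgf) auto
  also have "\<dots> = exp (- l * t + c * V)" by (simp add: exp_diff[symmetric] exp_add)
  finally show ?thesis by (simp add: c_def)
qed

lemma one_tail:
  fixes A :: "'a set" and p :: "'a \<Rightarrow> 'b::finite pmf" and f :: "'a \<Rightarrow> 'b \<Rightarrow> real"
    and X Vb T L :: real
  assumes fin: "finite A"
    and E0: "\<And>a. a \<in> A \<Longrightarrow> measure_pmf.expectation (p a) (f a) = 0"
    and bnd: "\<And>a y. a \<in> A \<Longrightarrow> \<bar>f a y\<bar> \<le> 2 * X"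
    and V: "(\<Sum>a\<in>A. measure_pmf.expectation (p a) (\<lambda>y. (f a y)\<^sup>2)) \<le> Vb"
    and X0: "0 \<le> X" and Vbb: "0 \<le> Vb" and T0: "0 \<le> T" and XT: "X > 0 \<Longrightarrow> T > 0"
    and TT: "4 * L * Vb + 4 * L * X * T \<le> T\<^sup>2"
  shows "measure_pmf.prob (Pi_pmf A d p) {\<omega>. (\<Sum>a\<in>A. f a (\<omega> a)) > T} \<le> exp (- 2 * L)"
proof (cases "X = 0")
  case True
  then have "f a y = 0" if "a \<in> A" for a y using bnd[OF that, of y] by simp
  then have "{\<omega>. (\<Sum>a\<in>A. f a (\<omega> a)) > T} = {}" using T0 by auto
  then show ?thesis by simp
next
  case False
  with X0 have X: "X > 0" by simp
  with XT have T: "T > 0" by simp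
  define V where "V = Vb + X * T / 3"
  have Vp: "V > 0" unfolding V_def using X T Vbb by (simp add: add_nonneg_pos)
  define D where "D = V + 2 * X * T / 3"
  have Dp: "D > 0" unfolding D_def using X T Vp by (simp add: add_pos_nonneg)
  define l where "l = T / D"
  have lp: "l > 0" unfolding l_def using T Dp by simp
  have lM: "l * (2 * X) < 3"
  proof -
    have "l * (2 * X) = 2 * X * T / D" by (simp add: l_def)
    also have "\<dots> < 3" using Dp Vp by (simp add: pos_divide_less_eq D_def)
    finally show ?thesis .
  qed
  have V': "(\<Sum>a\<in>A. measure_pmf.expectation (p a) (\<lambda>y. (f a y)\<^sup>2)) \<le> V"
  proof -
    have "0 \<le> X * T / 3" using X T by simp
    then show ?thesis using V unfolding V_def by linarith
  qed
  have "measure_pmf.prob (Pi_pmf A d p) {\<omega>. (\<Sum>a\<in>A. f a (\<omega> a)) > T}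
      \<le> measure_pmf.prob (Pi_pmf A d p) {\<omega>. (\<Sum>a\<in>A. f a (\<omega> a)) \<ge> T}"
    by (intro measure_pmf.finite_measure_mono) auto
  also have "\<dots> \<le> exp (- l * T + l\<^sup>2 * V / (2 * (1 - l * (2 * X) / 3)))"
    by (rule bernstein_tail[OF fin E0 bnd V' lp lM])
  also have "- l * T + l\<^sup>2 * V / (2 * (1 - l * (2 * X) / 3)) = - T\<^sup>2 / (2 * D)"
  proof -
    have e: "1 - l * (2 * X) / 3 = V / D" unfolding l_def D_def using Dp by (simp add: field_simps D_def)
    have "l\<^sup>2 * V / (2 * (1 - l * (2 * X) / 3)) = l\<^sup>2 * D / 2"
      unfolding e using Vp Dp by (simp add: field_simps)
    then show ?thesis unfolding l_def using Dp by (simp add: field_simps power2_eq_square)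
  qed
  also have "exp (- T\<^sup>2 / (2 * D)) \<le> exp (- 2 * L)"
  proof -
    have "4 * L * D \<le> T\<^sup>2" using TT unfolding D_def V_def by (simp add: algebra_simps)
    then show ?thesis using Dp by (simp add: field_simps)
  qed
  finally show ?thesis .
qed

lemma UNIV_bool_pair: "(UNIV :: (bool \<times> bool) set) = {(True,True),(True,False),(False,True),(False,False)}"
  by auto

lemma expect_pair_bern:
  fixes h :: "bool \<times> bool \<Rightarrow> real"
  assumes "0 \<le> p" "p \<le> 1"
  shows "measure_pmf.expectation (pair_pmf (bernoulli_pmf p) (bernoulli_pmf p)) h
     = p * p * h (True,True) + p * (1 - p) * h (True,False) + (1 - p) * p * h (False,True)
       + (1 - p) * (1 - p) * h (False,False)"
  by (subst integral_measure_pmf[where A = UNIV]) (use assms in \<open>auto simp: UNIV_bool_pair pmf_pair\<close>)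

lemma expect_Pi_comp:
  fixes h :: "'b \<Rightarrow> real"
  assumes "finite A" "e \<in> A"
  shows "measure_pmf.expectation (Pi_pmf A d q) (\<lambda>\<omega>. h (\<omega> e)) = measure_pmf.expectation (q e) h"
proof -
  have "measure_pmf.expectation (Pi_pmf A d q) (\<lambda>\<omega>. h (\<omega> e))
      = measure_pmf.expectation (map_pmf (\<lambda>\<omega>. \<omega> e) (Pi_pmf A d q)) h" by simp
  also have "\<dots> = measure_pmf.expectation (q e) h" using assms by (simp add: Pi_pmf_component)
  finally show ?thesis .
qed

definition Yf :: "real \<Rightarrow> bool \<times> bool \<Rightarrow> real" where
  "Yf p y = (of_bool (fst y) - p) * (of_bool (snd y) - p)"

lemma Yf_mean: "0 \<le> p \<Longrightarrow> p \<le> 1 \<Longrightarrow>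
   measure_pmf.expectation (pair_pmf (bernoulli_pmf p) (bernoulli_pmf p)) (\<lambda>y. c * Yf p y) = 0"
  by (simp add: expect_pair_bern Yf_def algebra_simps)

lemma Yf_var: "0 \<le> p \<Longrightarrow> p \<le> 1 \<Longrightarrow>
   measure_pmf.expectation (pair_pmf (bernoulli_pmf p) (bernoulli_pmf p)) (\<lambda>y. (c * Yf p y)\<^sup>2)
    = c\<^sup>2 * (p * (1 - p))\<^sup>2"
  by (simp add: expect_pair_bern Yf_def algebra_simps power2_eq_square)

lemma Yf_bnd: "0 \<le> p \<Longrightarrow> p \<le> 1 \<Longrightarrow> \<bar>Yf p y\<bar> \<le> 1"
  unfolding Yf_def abs_mult
  by (intro mult_le_one) (auto simp: of_bool_def split: if_splits)

lemma finite_pairs: "finite (sbm_pairs n)"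
  by (rule finite_subset[of _ "{..<n} \<times> {..<n}"]) (auto simp: sbm_pairs_def)

lemma sum_pairs:
  fixes F :: "nat \<Rightarrow> nat \<Rightarrow> real"
  shows "(\<Sum>i<n. \<Sum>j<n. F i j) = (\<Sum>i<n. F i i) + (\<Sum>e\<in>sbm_pairs n. F (fst e) (snd e) + F (snd e) (fst e))"
proof -
  define D where "D = (\<lambda>i. (i, i)) ` {..<n}"
  define U where "U = sbm_pairs n"
  define L where "L = (\<lambda>(i,j). (j,i)) ` U"
  have fU: "finite U" unfolding U_def by (rule finite_pairs)
  have fD: "finite D" unfolding D_def by simp
  have fL: "finite L" unfolding L_def using fU by simp
  have Usplit: "{..<n} \<times> {..<n} = D \<union> (U \<union> L)"
    unfolding D_def U_def L_def sbm_pairs_def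
    by (auto simp: image_iff)
  have "(\<Sum>i<n. \<Sum>j<n. F i j) = (\<Sum>e\<in>{..<n} \<times> {..<n}. F (fst e) (snd e))"
    by (simp add: sum.cartesian_product case_prod_unfold)
  also have "\<dots> = (\<Sum>e\<in>D. F (fst e) (snd e)) + ((\<Sum>e\<in>U. F (fst e) (snd e)) + (\<Sum>e\<in>L. F (fst e) (snd e)))"
  proof -
    have d1: "D \<inter> (U \<union> L) = {}" unfolding D_def U_def L_def sbm_pairs_def by auto
    have d2: "U \<inter> L = {}" unfolding U_def L_def sbm_pairs_def by auto
    show ?thesis
      unfolding Usplit by (simp add: sum.union_disjoint[OF fD _ d1] sum.union_disjoint[OF fU fL d2] fU fL)
  qed
  also have "(\<Sum>e\<in>D. F (fst e) (snd e)) = (\<Sum>i<n. F i i)"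
    unfolding D_def by (subst sum.reindex) (auto simp: inj_on_def)
  also have "(\<Sum>e\<in>L. F (fst e) (snd e)) = (\<Sum>e\<in>U. F (snd e) (fst e))"
    unfolding L_def by (subst sum.reindex) (auto simp: inj_on_def case_prod_unfold)
  finally show ?thesis unfolding U_def by (simp add: sum.distrib)
qed

lemma EA_diag: "EA n B \<psi> i i = 1"
  by (simp add: EA_def adjA_def)

lemma EA_off:
  assumes Bsym: "\<forall>a b. B a b = B b a" and Brange: "\<forall>a b. 0 \<le> B a b \<and> B a b \<le> 1"
    and ij: "i < n" "j < n" "i \<noteq> j"
  shows "EA n B \<psi> i j = sbm_P B \<psi> i j"
proof -
  let ?e = "(min i j, max i j)"
  have e: "?e \<in> sbm_pairs n" using ij by (auto simp: sbm_pairs_def min_def max_def)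
  have p: "sbm_P B \<psi> (min i j) (max i j) = sbm_P B \<psi> i j"
    using Bsym by (auto simp: sbm_P_def min_def max_def)
  have "EA n B \<psi> i j = measure_pmf.expectation (sbm_pair_pmf n B \<psi>) (\<lambda>\<omega>. (\<lambda>y. of_bool (fst y)) (\<omega> ?e))"
    unfolding EA_def adjA_def using ij by simp
  also have "\<dots> = measure_pmf.expectation (pair_pmf (bernoulli_pmf (sbm_P B \<psi> i j)) (bernoulli_pmf (sbm_P B \<psi> i j))) (\<lambda>y. of_bool (fst y))"
    unfolding sbm_pair_pmf_def by (subst expect_Pi_comp[OF finite_pairs e]) (simp add: p)
  also have "\<dots> = sbm_P B \<psi> i j"
    using Brange by (subst expect_pair_bern) (auto simp: sbm_P_def algebra_simps)
  finally show ?thesis .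
qed

lemma sum_filter_lt:
  fixes g :: "nat \<Rightarrow> real"
  shows "(\<Sum>i\<in>{i. i < n \<and> P i}. g i) = (\<Sum>i<n. if P i then g i else 0)"
proof -
  have "{i. i < n \<and> P i} = {i\<in>{..<n}. P i}" by auto
  then show ?thesis by (simp only:) (rule sum.inter_filter, simp)
qed

definition wt :: "(nat \<Rightarrow> 'k) \<Rightarrow> (nat \<Rightarrow> real) \<Rightarrow> 'k \<Rightarrow> 'k \<Rightarrow> nat \<Rightarrow> nat \<Rightarrow> real" where
  "wt \<psi> x k k1 i j = (if \<psi> i = k1 \<and> \<psi> j = k then (x i)\<^sup>2 else 0)"

definition fblk :: "('k \<Rightarrow> 'k \<Rightarrow> real) \<Rightarrow> (nat \<Rightarrow> 'k) \<Rightarrow> (nat \<Rightarrow> real) \<Rightarrow> 'k \<Rightarrow> 'k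
     \<Rightarrow> nat \<times> nat \<Rightarrow> bool \<times> bool \<Rightarrow> real" where
  "fblk B \<psi> x k k1 e y = (wt \<psi> x k k1 (fst e) (snd e) + wt \<psi> x k k1 (snd e) (fst e))
      * Yf (sbm_P B \<psi> (fst e) (snd e)) y"

lemma diag_entry:
  fixes B :: "'k::finite \<Rightarrow> 'k \<Rightarrow> real"
  assumes Bsym: "\<forall>a b. B a b = B b a" and Brange: "\<forall>a b. 0 \<le> B a b \<and> B a b \<le> 1"
  shows "S2tilde n B \<psi> x k \<omega> $ k1 $ k1 = (\<Sum>e\<in>sbm_pairs n. fblk B \<psi> x k k1 e (\<omega> e))"
proof -
  define H where "H i j = (adjA \<omega> i j - EA n B \<psi> i j) * (adjA' \<omega> i j - EA n B \<psi> i j)" for i j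
  have "S2tilde n B \<psi> x k \<omega> $ k1 $ k1 = (\<Sum>i<n. \<Sum>j<n. wt \<psi> x k k1 i j * H i j)"
    unfolding S2tilde_def H_def wt_def
    apply (simp add: sum_filter_lt)
    apply (intro sum.cong refl)
    apply (auto intro!: sum.cong)
    done
  also have "\<dots> = (\<Sum>i<n. wt \<psi> x k k1 i i * H i i) +
     (\<Sum>e\<in>sbm_pairs n. wt \<psi> x k k1 (fst e) (snd e) * H (fst e) (snd e) + wt \<psi> x k k1 (snd e) (fst e) * H (snd e) (fst e))"
    by (rule sum_pairs)
  also have "(\<Sum>i<n. wt \<psi> x k k1 i i * H i i) = 0"
    by (simp add: H_def EA_diag adjA_def adjA'_def)
  also have "(\<Sum>e\<in>sbm_pairs n. wt \<psi> x k k1 (fst e) (snd e) * H (fst e) (snd e) + wt \<psi> x k k1 (snd e) (fst e) * H (snd e) (fst e))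
      = (\<Sum>e\<in>sbm_pairs n. fblk B \<psi> x k k1 e (\<omega> e))"
  proof (rule sum.cong[OF refl])
    fix e assume e: "e \<in> sbm_pairs n"
    obtain i j where ij: "e = (i, j)" "i < j" "j < n" using e by (auto simp: sbm_pairs_def)
    have EA1: "EA n B \<psi> i j = sbm_P B \<psi> i j"
      using EA_off[OF Bsym Brange, of i n j \<psi>] ij by simp
    have EA2: "EA n B \<psi> j i = sbm_P B \<psi> i j"
      using EA_off[OF Bsym Brange, of j n i \<psi>] ij Bsym by (simp add: sbm_P_def)
    have H1: "H i j = Yf (sbm_P B \<psi> i j) (\<omega> e)"
      using ij by (simp add: H_def EA1 adjA_def adjA'_def Yf_def min_def max_def)
    have H2: "H j i = Yf (sbm_P B \<psi> i j) (\<omega> e)"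
      using ij by (simp add: H_def EA2 adjA_def adjA'_def Yf_def min_def max_def)
    show "wt \<psi> x k k1 (fst e) (snd e) * H (fst e) (snd e) + wt \<psi> x k k1 (snd e) (fst e) * H (snd e) (fst e)
        = fblk B \<psi> x k k1 e (\<omega> e)"
      using ij H1 H2 by (simp add: fblk_def algebra_simps)
  qed
  finally show ?thesis by simp
qed

lemma spec_norm_diag:
  fixes M :: "real^'k^'k"
  assumes diag: "\<And>i j. i \<noteq> j \<Longrightarrow> M $ i $ j = 0" and bnd: "\<And>i. \<bar>M $ i $ i\<bar> \<le> T"
  shows "spec_norm M \<le> T"
  unfolding spec_norm_def
proof (rule onorm_le)
  fix v :: "real^'k"
  have T0: "0 \<le> T" using bnd by (meson abs_ge_zero order_trans)
  have comp: "(M *v v) $ i = M $ i $ i * v $ i" for i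
  proof -
    have "(M *v v) $ i = (\<Sum>j\<in>UNIV. M $ i $ j * v $ j)" by (simp add: matrix_vector_mult_def)
    also have "\<dots> = (\<Sum>j\<in>UNIV. if j = i then M $ i $ i * v $ i else 0)"
      by (intro sum.cong) (auto simp: diag)
    finally show ?thesis by simp
  qed
  have "norm (M *v v) \<le> norm (T *\<^sub>R v)"
  proof (rule norm_le_componentwise_cart)
    fix i
    show "norm ((M *v v) $ i) \<le> norm ((T *\<^sub>R v) $ i)"
      using bnd[of i] T0 by (simp add: comp abs_mult mult_right_mono)
  qed
  then show "norm (M *v v) \<le> T * norm v" using T0 by simp
qed

lemma sup_norm_ge:
  assumes "i < n" shows "(x i)\<^sup>2 \<le> (sup_norm n x)\<^sup>2"
proof -
  have "\<bar>x i\<bar> \<le> sup_norm n x" unfolding sup_norm_def using assms by (intro Max_ge) auto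
  then show ?thesis by (metis abs_ge_zero power2_abs power_mono)
qed

lemma s_n_ge: "B a b \<le> s_n (B :: 'k::finite \<Rightarrow> 'k \<Rightarrow> real)"
  unfolding s_n_def by (rule Max_ge) (auto simp: image_iff intro!: exI[of _ "(a,b)"])

lemma sumW:
  "(\<Sum>i<n. \<Sum>j<n. (wt \<psi> x k k1 i j)\<^sup>2)
     = (\<Sum>i\<in>{i. i < n \<and> \<psi> i = k1}. (x i)^4) * real (comm_size n \<psi> k)"
proof -
  have c: "real (comm_size n \<psi> k) = (\<Sum>j\<in>{j. j < n \<and> \<psi> j = k}. (1::real))"
    by (simp add: comm_size_def)
  show ?thesis
    unfolding c sum_filter_lt sum_product
    by (intro sum.cong refl) (auto simp: wt_def power2_eq_square power4_eq_xxxx)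
qed

lemma norm4_le:
  fixes \<psi> :: "nat \<Rightarrow> 'k::finite"
  shows "(\<Sum>i\<in>{i. i < n \<and> \<psi> i = k1}. (x i)^4) \<le> (MAX k'. norm4_sq_comm n \<psi> x k')\<^sup>2"
proof -
  have s0: "0 \<le> (\<Sum>i\<in>{i. i < n \<and> \<psi> i = k1}. (x i)^4)" by (intro sum_nonneg) (simp add: zero_le_even_power)
  have "(\<Sum>i\<in>{i. i < n \<and> \<psi> i = k1}. (x i)^4) = (norm4_sq_comm n \<psi> x k1)\<^sup>2"
    unfolding norm4_sq_comm_def using s0 by simp
  also have "\<dots> \<le> (MAX k'. norm4_sq_comm n \<psi> x k')\<^sup>2"
    by (intro power_mono Max_ge) (auto simp: norm4_sq_comm_def zero_le_even_power intro!: sum_nonneg)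
  finally show ?thesis .
qed

lemma sq_sum_le: "((a::real) + b)\<^sup>2 \<le> 2 * (a\<^sup>2 + b\<^sup>2)"
  using sum_squares_bound[of a b] by (simp add: power2_sum)

lemma block_tail:
  fixes n :: nat and \<psi> :: "nat \<Rightarrow> 'k::finite" and B :: "'k \<Rightarrow> 'k \<Rightarrow> real"
    and x :: "nat \<Rightarrow> real" and k k1 :: 'k and sg :: real
  assumes n2: "n \<ge> 2"
    and Bsym: "\<forall>a b. B a b = B b a"
    and Brange: "\<forall>a b. 0 \<le> B a b \<and> B a b \<le> 1"
    and sg: "\<bar>sg\<bar> = 1"
  shows "measure_pmf.prob (sbm_pair_pmf n B \<psi>)
      {\<omega>. sg * S2tilde n B \<psi> x k \<omega> $ k1 $ k1 >
           4 * sqrt 6 / 3 * (MAX k'. norm4_sq_comm n \<psi> x k')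
               * sqrt (real (comm_size n \<psi> k) * ln (real n)) * s_n B
             + 4 * (sup_norm n x)^2 * ln (real n)} \<le> exp (- 2 * ln (real n))"
proof -
  define m where "m = (MAX k'. norm4_sq_comm n \<psi> x k')"
  define s where "s = s_n B"
  define X where "X = (sup_norm n x)\<^sup>2"
  define nk where "nk = real (comm_size n \<psi> k)"
  define L where "L = ln (real n)"
  define T where "T = 4 * sqrt 6 / 3 * m * sqrt (nk * L) * s + 4 * X * L"
  define p where "p e = sbm_P B \<psi> (fst e) (snd e)" for e :: "nat \<times> nat"
  define c where "c e = wt \<psi> x k k1 (fst e) (snd e) + wt \<psi> x k k1 (snd e) (fst e)" for e :: "nat \<times> nat"
  define f where "f e y = sg * fblk B \<psi> x k k1 e y" for e y
  have f_eq: "f e y = (sg * c e) * Yf (p e) y" for e y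
    by (simp add: f_def fblk_def c_def p_def)
  have f_fun: "f e = (\<lambda>y. (sg * c e) * Yf (p e) y)" for e
    by (rule ext) (simp add: f_eq)
  have p01: "0 \<le> p e" "p e \<le> 1" for e using Brange by (auto simp: p_def sbm_P_def)
  have ps: "p e \<le> s" for e by (simp add: p_def s_def sbm_P_def s_n_ge)
  have s0: "0 \<le> s" using ps[of "(0,0)"] p01[of "(0,0)"] by linarith
  have L0: "0 < L" unfolding L_def using n2 by simp
  have X0: "0 \<le> X" unfolding X_def by simp
  have nk0: "0 \<le> nk" unfolding nk_def by simp
  have m0: "0 \<le> m" unfolding m_def
    by (rule order_trans[OF _ Max_ge[of _ "norm4_sq_comm n \<psi> x k"]]) (auto simp: norm4_sq_comm_def zero_le_even_power intro!: sum_nonneg)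
  have wt_bnd: "0 \<le> wt \<psi> x k k1 i j \<and> wt \<psi> x k k1 i j \<le> X" if "i < n" for i j
    using sup_norm_ge[OF that, of x] by (auto simp: wt_def X_def)
  have set_eq: "{\<omega>. sg * S2tilde n B \<psi> x k \<omega> $ k1 $ k1 > T} = {\<omega>. (\<Sum>e\<in>sbm_pairs n. f e (\<omega> e)) > T}"
    by (simp add: diag_entry[OF Bsym Brange] f_def sum_distrib_left)
  define q where "q e = pair_pmf (bernoulli_pmf (p e)) (bernoulli_pmf (p e))" for e
  have Pq: "sbm_pair_pmf n B \<psi> = Pi_pmf (sbm_pairs n) (False, False) q"
    by (simp add: sbm_pair_pmf_def q_def[abs_def] p_def case_prod_unfold)
  have H1: "measure_pmf.expectation (q e) (f e) = 0"
    if "e \<in> sbm_pairs n" for e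
    using Yf_mean[OF p01[of e], of "sg * c e"] by (simp only: f_fun q_def)
  have H2: "\<bar>f e y\<bar> \<le> 2 * X" if e: "e \<in> sbm_pairs n" for e y
  proof -
    have "fst e < n" "snd e < n" using e by (auto simp: sbm_pairs_def)
    then have c: "\<bar>c e\<bar> \<le> 2 * X"
      using wt_bnd[of "fst e" "snd e"] wt_bnd[of "snd e" "fst e"] by (simp add: c_def)
    have "\<bar>f e y\<bar> = \<bar>c e\<bar> * \<bar>Yf (p e) y\<bar>" by (simp add: f_eq abs_mult sg)
    also have "\<dots> \<le> 2 * X * 1" using X0 by (intro mult_mono c Yf_bnd p01) auto
    finally show ?thesis by simp
  qed
  have H3: "(\<Sum>e\<in>sbm_pairs n. measure_pmf.expectation (q e)
      (\<lambda>y. (f e y)\<^sup>2)) \<le> 2 * nk * m\<^sup>2 * s\<^sup>2"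
  proof -
    define W where "W i j = (wt \<psi> x k k1 i j)\<^sup>2" for i j
    have "(\<Sum>e\<in>sbm_pairs n. measure_pmf.expectation (q e)
        (\<lambda>y. (f e y)\<^sup>2)) = (\<Sum>e\<in>sbm_pairs n. (c e)\<^sup>2 * (p e * (1 - p e))\<^sup>2)"
    proof (intro sum.cong refl)
      fix e
      have "sg\<^sup>2 = 1" by (metis sg power2_abs one_power2)
      then have "(sg * c e)\<^sup>2 = (c e)\<^sup>2" by (simp add: power_mult_distrib)
      then show "measure_pmf.expectation (q e)
        (\<lambda>y. (f e y)\<^sup>2) = (c e)\<^sup>2 * (p e * (1 - p e))\<^sup>2"
        using Yf_var[OF p01[of e], of "sg * c e"] \<open>(sg * c e)\<^sup>2 = (c e)\<^sup>2\<close>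
        by (simp only: f_fun q_def)
    qed
    also have "\<dots> \<le> (\<Sum>e\<in>sbm_pairs n. (2 * (W (fst e) (snd e) + W (snd e) (fst e))) * s\<^sup>2)"
    proof (intro sum_mono mult_mono)
      fix e
      show "(c e)\<^sup>2 \<le> 2 * (W (fst e) (snd e) + W (snd e) (fst e))"
        unfolding c_def W_def by (rule sq_sum_le)
      have "0 \<le> p e * (1 - p e)" using p01[of e] by simp
      moreover have "p e * (1 - p e) \<le> s"
      proof -
        have "p e * (1 - p e) \<le> p e" using p01[of e] by (intro mult_left_le) auto
        then show ?thesis using ps[of e] by linarith
      qed
      ultimately show "(p e * (1 - p e))\<^sup>2 \<le> s\<^sup>2" by (auto intro: power_mono)
    qed (auto simp: W_def)
    also have "\<dots> = 2 * s\<^sup>2 * (\<Sum>e\<in>sbm_pairs n. W (fst e) (snd e) + W (snd e) (fst e))"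
      by (simp add: sum_distrib_left sum_distrib_right algebra_simps)
    also have "\<dots> \<le> 2 * s\<^sup>2 * (m\<^sup>2 * nk)"
    proof (rule mult_left_mono)
      have "(\<Sum>e\<in>sbm_pairs n. W (fst e) (snd e) + W (snd e) (fst e)) = (\<Sum>i<n. \<Sum>j<n. W i j) - (\<Sum>i<n. W i i)"
        using sum_pairs[of W n] by simp
      also have "\<dots> \<le> (\<Sum>i<n. \<Sum>j<n. W i j)"
        by (simp add: W_def sum_nonneg)
      also have "(\<Sum>i<n. \<Sum>j<n. W i j) = (\<Sum>i\<in>{i. i < n \<and> \<psi> i = k1}. (x i)^4) * nk"
        unfolding W_def nk_def by (rule sumW)
      also have "\<dots> \<le> m\<^sup>2 * nk"
        unfolding m_def by (intro mult_right_mono norm4_le nk0)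
      finally show "(\<Sum>e\<in>sbm_pairs n. W (fst e) (snd e) + W (snd e) (fst e)) \<le> m\<^sup>2 * nk" .
    qed simp
    finally show ?thesis by (simp add: algebra_simps)
  qed
  have H4: "0 \<le> 2 * nk * m\<^sup>2 * s\<^sup>2" using nk0 by simp
  have T0: "0 \<le> T" unfolding T_def using m0 s0 nk0 L0 X0 by simp
  have H5: "X > 0 \<Longrightarrow> T > 0" unfolding T_def using m0 s0 nk0 L0 X0
    by (intro add_nonneg_pos) auto
  have H6: "4 * L * (2 * nk * m\<^sup>2 * s\<^sup>2) + 4 * L * X * T \<le> T\<^sup>2"
  proof -
    define a where "a = 4 * sqrt 6 / 3 * m * sqrt (nk * L) * s"
    define b where "b = 4 * X * L"
    have a0: "0 \<le> a" unfolding a_def using m0 s0 nk0 L0 by simp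
    have b0: "0 \<le> b" unfolding b_def using X0 L0 by simp
    have a2: "a\<^sup>2 = 32 / 3 * (m\<^sup>2 * nk * L * s\<^sup>2)"
      unfolding a_def using nk0 L0 by (simp add: power_mult_distrib power_divide)
    have "T\<^sup>2 = a\<^sup>2 + a * b + b * T" unfolding T_def a_def[symmetric] b_def[symmetric]
      by (simp add: power2_eq_square algebra_simps)
    moreover have "0 \<le> m\<^sup>2 * nk * L * s\<^sup>2" using nk0 L0 by simp
    moreover have "0 \<le> a * b" using a0 b0 by simp
    moreover have "b * T = 4 * L * X * T" unfolding b_def by simp
    moreover have "4 * L * (2 * nk * m\<^sup>2 * s\<^sup>2) = 8 * (m\<^sup>2 * nk * L * s\<^sup>2)" by (simp add: algebra_simps)
    ultimately show ?thesis unfolding a2 by linarith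
  qed
  have "measure_pmf.prob (Pi_pmf (sbm_pairs n) (False, False) q)
         {\<omega>. (\<Sum>e\<in>sbm_pairs n. f e (\<omega> e)) > T} \<le> exp (- 2 * L)"
    by (rule one_tail[OF finite_pairs H1 H2 H3 X0 H4 T0 H5 H6])
  then show ?thesis
    unfolding Pq m_def[symmetric] s_def[symmetric] X_def[symmetric] nk_def[symmetric]
      L_def[symmetric] T_def[symmetric] set_eq .
qed

lemma exp_m2ln: "n \<ge> 2 \<Longrightarrow> exp (- 2 * ln (real n)) = 1 / (real n)^2"
proof -
  assume n: "n \<ge> 2"
  have "- 2 * ln (real n) = - ln ((real n)^2)" using n by (simp add: ln_realpow)
  then show ?thesis using n by (simp add: exp_minus inverse_eq_divide)
qed

theorem lemmaD2:
  fixes n :: nat and \<psi> :: "nat \<Rightarrow> 'k::finite" and B :: "'k \<Rightarrow> 'k \<Rightarrow> real"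
    and x :: "nat \<Rightarrow> real" and k :: 'k
  assumes n2: "n \<ge> 2"
    and nk: "\<forall>k'. comm_size n \<psi> k' \<ge> 1"
    and Bsym: "\<forall>a b. B a b = B b a"
    and Brange: "\<forall>a b. 0 \<le> B a b \<and> B a b \<le> 1"
  shows "measure_pmf.prob (sbm_pair_pmf n B \<psi>)
      {\<omega>. spec_norm (S2tilde n B \<psi> x k \<omega>)
           \<le> 4 * sqrt 6 / 3 * (MAX k'. norm4_sq_comm n \<psi> x k')
               * sqrt (real (comm_size n \<psi> k) * ln (real n)) * s_n B
             + 4 * (sup_norm n x)^2 * ln (real n)}
    \<ge> 1 - 2 * real CARD('k) / (real n)^2"
proof -
  define T where "T = 4 * sqrt 6 / 3 * (MAX k'. norm4_sq_comm n \<psi> x k')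
               * sqrt (real (comm_size n \<psi> k) * ln (real n)) * s_n B
             + 4 * (sup_norm n x)^2 * ln (real n)"
  define P where "P = sbm_pair_pmf n B \<psi>"
  define S where "S \<omega> = S2tilde n B \<psi> x k \<omega>" for \<omega>
  define E where "E = {\<omega>. spec_norm (S \<omega>) \<le> T}"
  define A where "A k1 = {\<omega>. 1 * S \<omega> $ k1 $ k1 > T} \<union> {\<omega>. (-1) * S \<omega> $ k1 $ k1 > T}" for k1
  have sub: "UNIV - E \<subseteq> (\<Union>k1. A k1)"
  proof
    fix \<omega> assume "\<omega> \<in> UNIV - E"
    then have nE: "\<not> spec_norm (S \<omega>) \<le> T" by (simp add: E_def)
    show "\<omega> \<in> (\<Union>k1. A k1)"
    proof (rule ccontr)
      assume "\<omega> \<notin> (\<Union>k1. A k1)"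
      then have "\<not> T < S \<omega> $ i $ i \<and> \<not> T < - S \<omega> $ i $ i" for i by (auto simp: A_def)
      then have "\<bar>S \<omega> $ i $ i\<bar> \<le> T" for i by (meson abs_le_iff not_less)
      moreover have "S \<omega> $ i $ j = 0" if "i \<noteq> j" for i j using that by (simp add: S_def S2tilde_def)
      ultimately have "spec_norm (S \<omega>) \<le> T" by (intro spec_norm_diag)
      with nE show False by simp
    qed
  qed
  have pA: "measure_pmf.prob P (A k1) \<le> 2 / (real n)^2" for k1
  proof -
    have "measure_pmf.prob P (A k1) \<le> measure_pmf.prob P {\<omega>. 1 * S \<omega> $ k1 $ k1 > T}
        + measure_pmf.prob P {\<omega>. (-1) * S \<omega> $ k1 $ k1 > T}"
      unfolding A_def by (rule measure_subadditive) (auto simp: measure_pmf.emeasure_eq_measure)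
    also have "\<dots> \<le> exp (- 2 * ln (real n)) + exp (- 2 * ln (real n))"
      unfolding P_def S_def T_def
      by (intro add_mono block_tail[OF n2 Bsym Brange]) auto
    also have "\<dots> = 2 / (real n)^2" unfolding exp_m2ln[OF n2] by simp
    finally show ?thesis .
  qed
  have "measure_pmf.prob P (UNIV - E) \<le> measure_pmf.prob P (\<Union>k1. A k1)"
    by (intro measure_pmf.finite_measure_mono sub) auto
  also have "\<dots> \<le> (\<Sum>k1\<in>UNIV. measure_pmf.prob P (A k1))"
    by (rule measure_subadditive_finite) (auto simp: measure_pmf.emeasure_eq_measure)
  also have "\<dots> \<le> (\<Sum>k1\<in>(UNIV::'k set). 2 / (real n)^2)"
    by (intro sum_mono pA)
  also have "\<dots> = 2 * real CARD('k) / (real n)^2" by simp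
  finally have c: "measure_pmf.prob P (UNIV - E) \<le> 2 * real CARD('k) / (real n)^2" .
  have "measure_pmf.prob P E = 1 - measure_pmf.prob P (UNIV - E)"
    using measure_pmf.prob_compl[of E P] by simp
  with c have "measure_pmf.prob P E \<ge> 1 - 2 * real CARD('k) / (real n)^2" by simp
  then show ?thesis unfolding P_def E_def S_def T_def .
qed

end
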